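(* Let $f(x)=\mathbb{E}[F(x,\omega)]$ be $\tau$-strongly convex on $\mathbb{R}^n$ ($\tau>0$), and suppose: (a) for every $\omega\in\Omega$, $F(\cdot,\omega)$ is convex and continuously differentiable on $\mathbb{R}^n$, and $f$ is $C^1$ with $L$-Lipschitz continuous gradient; (b) for all $k\ge 0$, with $\bar w_{k,N_k}\triangleq \nabla f(x_k)-\frac{1}{N_k}\sum_{j=1}^{N_k}\nabla_x F(x_k,\omega_{j,k})$, there are $\nu_1,\nu_2>0$ with $\mathbb{E}[\|\bar w_{k,N_k}\|^2\mid\mathcal{F}_k]\le \frac{\nu_1^2\|x_k\|^2+\nu_2^2}{N_k}$ and $\mathbb{E}[\bar w_{k,N_k}\mid \mathcal{F}_k]=0$ almost surely; (c) every $H_k$ is $\mathcal{F}_k$-measurable, symmetric positive definite, and $\underline{\lambda}\mathbf{I}\preceq H_k\preceq\overline{\lambda}\mathbf{I}$ almost surely for all $k\ge0$, for constants $0<\underline{\lambda}\le\overline{\lambda}$. Let $\{x_k\}$ be generated by $x_{k+1}=x_k-\gamma_kH_k\frac{1}{N_k}\sum_{j=1}^{N_k}\nabla_xF(x_k,\omega_{j,k})$, where $\{N_k\}$ is an increasing sequence of positive integers with $N_0>\frac{2\nu_1^2\overline{\lambda}}{\tau^2\underline{\lambda}}$ and $\gamma_k=\frac{1}{L\overline{\lambda}}$ for all $k$. Then for all $k\ge1$, $$\mathbb{E}[f(x_{k+1})-f(x^* )]\le\Big(1-\frac{\tau\underline{\lambda}}{L\overline{\lambda}}+\frac{2\nu_1^2}{L\tau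 N_0}\Big)\mathbb{E}[f(x_k)-f(x^* )]+\frac{2\nu_1^2\|x^*\|^2+\nu_2^2}{2LN_k}.$$
   Context: $(\Omega,\mathcal{F},\mathbb{P})$ is a probability space, $\xi:\Omega\to\mathbb{R}^o$ a random vector, $F:\mathbb{R}^n\times\mathbb{R}^o\to\mathbb{R}$, and $F(x,\omega)$ abbreviates $F(x,\xi(\omega))$; the problem is $\min_{x\in\mathbb{R}^n}f(x)$ with (unique) minimizer $x^*$. At iteration $k$, $\omega_{1,k},\dots,\omega_{N_k,k}$ are the sampled realizations of $\omega$, $x_0\in\mathbb{R}^n$ is given, and $\mathcal{F}_k\triangleq\sigma\{x_0,x_1,\dots,x_{k-1}\}$. *)

theory Defs
  imports "HOL-Analysis.Analysis" "HOL-Probability.Probability"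
begin

definition strongly_convex_on :: "'a::real_normed_vector set \<Rightarrow> real \<Rightarrow> ('a \<Rightarrow> real) \<Rightarrow> bool" where
  "strongly_convex_on S \<tau> f \<longleftrightarrow>
     (\<forall>x\<in>S. \<forall>y\<in>S. \<forall>t\<in>{0..1::real}.
        f ((1 - t) *\<^sub>R x + t *\<^sub>R y) \<le> (1 - t) * f x + t * f y - \<tau> / 2 * t * (1 - t) * (norm (x - y))\<^sup>2)"

definition gen_sigma :: "'a measure \<Rightarrow> (nat \<Rightarrow> 'a \<Rightarrow> 'b::topological_space) \<Rightarrow> nat set \<Rightarrow> 'a measure" where
  "gen_sigma M X I = sigma (space M) (\<Union>i\<in>I. {X i -` A \<inter> space M | A. A \<in> sets borel})"

end

theory Submission
  imports Defs
begin

lemma line_deriv: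
  fixes f :: "'a::real_inner \<Rightarrow> real"
  assumes "\<forall>x. GDERIV f x :> g x"
  shows "((\<lambda>t. f (x + t *\<^sub>R d)) has_real_derivative (g (x + t *\<^sub>R d) \<bullet> d)) (at t)"
proof -
  have 1: "(f has_derivative (\<lambda>h. h \<bullet> g (x + t *\<^sub>R d))) (at (x + t *\<^sub>R d))"
    using assms gderiv_def by blast
  have 2: "((\<lambda>t. x + t *\<^sub>R d) has_derivative (\<lambda>s. s *\<^sub>R d)) (at t)"
    by (auto intro!: derivative_eq_intros)
  have "((\<lambda>t. f (x + t *\<^sub>R d)) has_derivative (\<lambda>s. (s *\<^sub>R d) \<bullet> g (x + t *\<^sub>R d))) (at t)"
    using has_derivative_compose[OF 2 1] by (simp add: o_def)
  moreover have "(\<lambda>s. (s *\<^sub>R d) \<bullet> g (x + t *\<^sub>R d)) = (*) (g (x + t *\<^sub>R d) \<bullet> d)"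
    by (auto simp: fun_eq_iff inner_commute)
  ultimately show ?thesis by (simp add: has_field_derivative_def)
qed

lemma descent:
  fixes f :: "'a::real_inner \<Rightarrow> real"
  assumes gr: "\<forall>x. GDERIV f x :> g x" and lip: "\<forall>x y. norm (g x - g y) \<le> L * norm (x - y)"
  shows "f y \<le> f x + g x \<bullet> (y - x) + L / 2 * (norm (y - x))\<^sup>2"
proof -
  define d where "d = y - x"
  define \<phi> where "\<phi> t = f (x + t *\<^sub>R d) - t * (g x \<bullet> d) - L / 2 * t\<^sup>2 * (norm d)\<^sup>2" for t
  have "\<phi> 1 \<le> \<phi> 0"
  proof (rule DERIV_nonpos_imp_nonincreasing[of 0 1])
    fix t :: real assume t: "0 \<le> t" "t \<le> 1"
    have D: "(\<phi> has_real_derivative (g (x + t *\<^sub>R d) \<bullet> d - g x \<bullet> d - L / 2 * (2 * t) * (norm d)\<^sup>2)) (at t)"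
      unfolding \<phi>_def
      by (rule derivative_eq_intros line_deriv[OF gr] refl | simp)+
    have "(g (x + t *\<^sub>R d) - g x) \<bullet> d \<le> norm (g (x + t *\<^sub>R d) - g x) * norm d"
      by (rule norm_cauchy_schwarz)
    also have "\<dots> \<le> L * norm (t *\<^sub>R d) * norm d"
      using lip[rule_format, of "x + t *\<^sub>R d" x] by (intro mult_right_mono) auto
    also have "\<dots> = L * t * (norm d)\<^sup>2" using t by (simp add: power2_eq_square)
    finally have "g (x + t *\<^sub>R d) \<bullet> d - g x \<bullet> d - L / 2 * (2 * t) * (norm d)\<^sup>2 \<le> 0"
      by (simp add: inner_diff_left)
    then show "\<exists>y. (\<phi> has_real_derivative y) (at t) \<and> y \<le> 0" using D by blast
  qed simp
  then show ?thesis by (simp add: \<phi>_def d_def)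
qed

lemma grad_ineq:
  fixes f :: "'a::real_inner \<Rightarrow> real"
  assumes gr: "\<forall>x. GDERIV f x :> g x" and sc: "strongly_convex_on UNIV \<tau> f"
  shows "f x + g x \<bullet> (y - x) + \<tau> / 2 * (norm (y - x))\<^sup>2 \<le> f y"
proof -
  define d where "d = y - x"
  have D: "((\<lambda>t. f (x + t *\<^sub>R d)) has_real_derivative (g x \<bullet> d)) (at 0)"
    using line_deriv[OF gr, of x d 0] by simp
  have lim1: "((\<lambda>t. (f (x + t *\<^sub>R d) - f x) / t) \<longlongrightarrow> g x \<bullet> d) (at_right 0)"
    using has_field_derivative_at_within[OF D, of "{0<..}"]
    unfolding has_field_derivative_iff by simp
  have lim2: "((\<lambda>t. f y - f x - \<tau> / 2 * (1 - t) * (norm d)\<^sup>2) \<longlongrightarrow> f y - f x - \<tau> / 2 * (1 - 0) * (norm d)\<^sup>2) (at_right 0)"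
    by (intro tendsto_intros)
  have ev: "eventually (\<lambda>t. (f (x + t *\<^sub>R d) - f x) / t \<le> f y - f x - \<tau> / 2 * (1 - t) * (norm d)\<^sup>2) (at_right 0)"
    unfolding eventually_at_right[OF zero_less_one]
  proof (intro exI[of _ 1] conjI allI impI)
    fix t :: real assume t: "0 < t" "t < 1"
    have eq: "(1 - t) *\<^sub>R x + t *\<^sub>R y = x + t *\<^sub>R d"
      by (simp add: d_def algebra_simps)
    have "f ((1 - t) *\<^sub>R x + t *\<^sub>R y) \<le> (1 - t) * f x + t * f y - \<tau> / 2 * t * (1 - t) * (norm (x - y))\<^sup>2"
      using sc t unfolding strongly_convex_on_def by auto
    moreover have "norm (x - y) = norm d" by (simp add: d_def norm_minus_commute)
    ultimately have "f (x + t *\<^sub>R d) - f x \<le> t * (f y - f x - \<tau> / 2 * (1 - t) * (norm d)\<^sup>2)"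
      using eq by (simp add: algebra_simps)
    then show "(f (x + t *\<^sub>R d) - f x) / t \<le> f y - f x - \<tau> / 2 * (1 - t) * (norm d)\<^sup>2"
      using t by (simp add: divide_le_eq mult.commute)
  qed simp
  have "g x \<bullet> d \<le> f y - f x - \<tau> / 2 * (1 - 0) * (norm d)\<^sup>2"
    by (rule tendsto_le[OF _ lim2 lim1 ev]) simp
  then show ?thesis by (simp add: d_def)
qed

lemma PL:
  fixes f :: "'a::real_inner \<Rightarrow> real"
  assumes gr: "\<forall>x. GDERIV f x :> g x" and sc: "strongly_convex_on UNIV \<tau> f" and tau: "\<tau> > 0"
  shows "2 * \<tau> * (f x - f xs) \<le> (norm (g x))\<^sup>2"
proof -
  have "f x + g x \<bullet> (xs - x) + \<tau> / 2 * (norm (xs - x))\<^sup>2 \<le> f xs"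
    by (rule grad_ineq[OF gr sc])
  moreover have "- (norm (g x) * norm (xs - x)) \<le> g x \<bullet> (xs - x)"
    using norm_cauchy_schwarz[of "- g x" "xs - x"] by simp
  moreover have "0 \<le> (norm (g x) - \<tau> * norm (xs - x))\<^sup>2" by simp
  ultimately have 1: "f x - f xs \<le> norm (g x) * norm (xs - x) - \<tau> / 2 * (norm (xs - x))\<^sup>2" by simp
  have "2 * \<tau> * (norm (g x) * norm (xs - x) - \<tau> / 2 * (norm (xs - x))\<^sup>2) \<le> (norm (g x))\<^sup>2"
    using \<open>0 \<le> (norm (g x) - \<tau> * norm (xs - x))\<^sup>2\<close> by (simp add: power2_eq_square algebra_simps)
  moreover have "2 * \<tau> * (f x - f xs) \<le> 2 * \<tau> * (norm (g x) * norm (xs - x) - \<tau> / 2 * (norm (xs - x))\<^sup>2)"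
    using 1 tau by simp
  ultimately show ?thesis by linarith
qed

lemma grad_zero:
  fixes f :: "'a::real_inner \<Rightarrow> real"
  assumes gr: "\<forall>x. GDERIV f x :> g x" and lip: "\<forall>x y. norm (g x - g y) \<le> L * norm (x - y)"
    and L: "L > 0" and mn: "\<forall>x. f xs \<le> f x"
  shows "g xs = 0"
proof -
  have "f (xs - (1/L) *\<^sub>R g xs) \<le> f xs + g xs \<bullet> ((xs - (1/L) *\<^sub>R g xs) - xs) + L / 2 * (norm ((xs - (1/L) *\<^sub>R g xs) - xs))\<^sup>2"
    by (rule descent[OF gr lip])
  also have "\<dots> = f xs - (1 / (2 * L)) * (norm (g xs))\<^sup>2"
    using L by (simp add: power2_eq_square inner_commute field_simps dot_square_norm[symmetric])
      (metis power2_eq_square power2_norm_eq_inner)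
  finally have "(1 / (2 * L)) * (norm (g xs))\<^sup>2 \<le> 0" using mn[rule_format, of "xs - (1/L) *\<^sub>R g xs"] by simp
  then have "(norm (g xs))\<^sup>2 \<le> 0" using L by (simp add: field_simps)
  then show ?thesis by simp
qed

lemma quad_growth:
  fixes f :: "'a::real_inner \<Rightarrow> real"
  assumes gr: "\<forall>x. GDERIV f x :> g x" and sc: "strongly_convex_on UNIV \<tau> f" and gz: "g xs = 0"
  shows "\<tau> / 2 * (norm (x - xs))\<^sup>2 \<le> f x - f xs"
  using grad_ineq[OF gr sc, of xs x] gz by simp

lemma mat_sym:
  fixes A :: "real^'n^'n"
  assumes "transpose A = A"
  shows "u \<bullet> (A *v w) = w \<bullet> (A *v u)"
proof -
  have "u \<bullet> (A *v w) = (u v* A) \<bullet> w" by (simp add: dot_lmul_matrix)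
  also have "u v* A = transpose A *v u" by (simp add: vector_transpose_matrix)
  finally show ?thesis using assms by (simp add: inner_commute)
qed

lemma mat_cs:
  fixes A :: "real^'n^'n"
  assumes sym: "transpose A = A" and psd: "\<forall>v. 0 \<le> v \<bullet> (A *v v)"
  shows "(u \<bullet> (A *v w))\<^sup>2 \<le> (u \<bullet> (A *v u)) * (w \<bullet> (A *v w))"
proof -
  define a where "a = u \<bullet> (A *v u)"
  define b where "b = u \<bullet> (A *v w)"
  define c where "c = w \<bullet> (A *v w)"
  have q: "0 \<le> a + 2 * t * b + t\<^sup>2 * c" for t
  proof -
    have "0 \<le> (u + t *\<^sub>R w) \<bullet> (A *v (u + t *\<^sub>R w))" using psd by blast
    also have "\<dots> = a + t * (u \<bullet> (A *v w)) + t * (w \<bullet> (A *v u)) + t\<^sup>2 * c"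
      by (simp add: a_def c_def matrix_vector_right_distrib matrix_vector_mult_scaleR
          inner_add_left inner_add_right power2_eq_square algebra_simps)
    finally show ?thesis using mat_sym[OF sym, of w u] by (simp add: b_def algebra_simps)
  qed
  have c0: "0 \<le> c" using psd c_def by blast
  show ?thesis
  proof (cases "c = 0")
    case True
    show ?thesis
    proof (rule ccontr)
      assume "\<not> ?thesis"
      then have "b \<noteq> 0" using True by (simp add: b_def c_def)
      then have "0 \<le> a + 2 * (- (a + 1) / (2 * b)) * b" using q[of "- (a + 1) / (2 * b)"] True by simp
      then show False using \<open>b \<noteq> 0\<close> by (simp add: field_simps)
    qed
  next
    case False
    then have cp: "c > 0" using c0 by simp
    have "0 \<le> a + 2 * (- b / c) * b + (- b / c)\<^sup>2 * c" by (rule q)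
    also have "\<dots> = (a * c - b\<^sup>2) / c" using cp by (simp add: field_simps power2_eq_square)
    finally have "0 \<le> a * c - b\<^sup>2" using cp by (simp add: divide_nonneg_pos zero_le_divide_iff)
    then show ?thesis by (simp add: a_def b_def c_def)
  qed
qed

lemma mat_sq_bound:
  fixes A :: "real^'n^'n"
  assumes sym: "transpose A = A" and psd: "\<forall>v. 0 \<le> v \<bullet> (A *v v)"
    and up: "\<forall>v. v \<bullet> (A *v v) \<le> hi * (norm v)\<^sup>2"
  shows "(norm (A *v g))\<^sup>2 \<le> hi * (g \<bullet> (A *v g))"
proof -
  define u where "u = A *v g"
  have "((norm u)\<^sup>2)\<^sup>2 = (u \<bullet> (A *v g))\<^sup>2" by (simp add: u_def dot_square_norm)
  also have "\<dots> \<le> (u \<bullet> (A *v u)) * (g \<bullet> (A *v g))" by (rule mat_cs[OF sym psd])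
  also have "\<dots> \<le> (hi * (norm u)\<^sup>2) * (g \<bullet> (A *v g))"
    using up psd by (intro mult_right_mono) auto
  finally have *: "(norm u)\<^sup>2 * (norm u)\<^sup>2 \<le> (norm u)\<^sup>2 * (hi * (g \<bullet> (A *v g)))"
    by (simp add: power2_eq_square algebra_simps)
  show ?thesis
  proof (cases "norm u = 0")
    case True then show ?thesis using psd up by (simp add: u_def)
  next
    case False then have "(norm u)\<^sup>2 > 0" by simp
    with * have "(norm u)\<^sup>2 * (norm u)\<^sup>2 \<le> (norm u)\<^sup>2 * (hi * (g \<bullet> (A *v g)))" by simp
    then have "(norm u)\<^sup>2 \<le> hi * (g \<bullet> (A *v g))"
      using \<open>(norm u)\<^sup>2 > 0\<close> mult_le_cancel_left_pos by blast
    then show ?thesis by (simp add: u_def)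
  qed
qed

lemma step_bound:
  fixes f :: "real^'n \<Rightarrow> real" and A :: "real^'n^'n"
  assumes gr: "\<forall>x. GDERIV f x :> g x" and lip: "\<forall>x y. norm (g x - g y) \<le> L * norm (x - y)"
    and sc: "strongly_convex_on UNIV \<tau> f" and tau: "\<tau> > 0" and L: "L > 0"
    and sym: "transpose A = A"
    and bnd: "\<forall>v. lo * (norm v)\<^sup>2 \<le> v \<bullet> (A *v v) \<and> v \<bullet> (A *v v) \<le> hi * (norm v)\<^sup>2"
    and lo: "0 < lo" "lo \<le> hi"
  shows "f (x - (1 / (L * hi)) *\<^sub>R (A *v (g x - w))) - f xs
     \<le> (1 - \<tau> * lo / (L * hi)) * (f x - f xs) + (norm w)\<^sup>2 / (2 * L)"
proof -
  define c where "c = 1 / (L * hi)"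
  define G where "G = g x"
  define gg where "gg = G - w"
  define z where "z = x - c *\<^sub>R (A *v gg)"
  have hi: "hi > 0" using lo by simp
  have cpos: "c > 0" using L hi by (simp add: c_def)
  have psd: "\<forall>v. 0 \<le> v \<bullet> (A *v v)"
  proof
    fix v :: "real^'n"
    have "0 \<le> lo * (norm v)\<^sup>2" using lo by simp
    then show "0 \<le> v \<bullet> (A *v v)" using bnd by (meson order_trans)
  qed
  have up: "\<forall>v. v \<bullet> (A *v v) \<le> hi * (norm v)\<^sup>2" using bnd by blast
  have d: "f z \<le> f x + G \<bullet> (z - x) + L / 2 * (norm (z - x))\<^sup>2"
    unfolding G_def by (rule descent[OF gr lip])
  have zx: "z - x = - (c *\<^sub>R (A *v gg))" by (simp add: z_def)
  have 1: "G \<bullet> (z - x) = - c * (G \<bullet> (A *v gg))" by (simp add: zx)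
  have 2: "(norm (z - x))\<^sup>2 = c\<^sup>2 * (norm (A *v gg))\<^sup>2" by (simp add: zx power_mult_distrib)
  have 3: "(norm (A *v gg))\<^sup>2 \<le> hi * (gg \<bullet> (A *v gg))" by (rule mat_sq_bound[OF sym psd up])
  have cL: "L / 2 * c\<^sup>2 * hi = c / 2" using L hi by (simp add: c_def power2_eq_square field_simps)
  have "L / 2 * (norm (z - x))\<^sup>2 \<le> L / 2 * c\<^sup>2 * (hi * (gg \<bullet> (A *v gg)))"
    unfolding 2 using 3 L by (simp add: mult_left_mono)
  also have "\<dots> = c / 2 * (gg \<bullet> (A *v gg))" using cL by (simp add: algebra_simps)
  finally have 4: "L / 2 * (norm (z - x))\<^sup>2 \<le> c / 2 * (gg \<bullet> (A *v gg))" .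
  have symw: "w \<bullet> (A *v G) = G \<bullet> (A *v w)" by (rule mat_sym[OF sym])
  have id: "G \<bullet> (A *v gg) - (gg \<bullet> (A *v gg)) / 2 = (G \<bullet> (A *v G) - w \<bullet> (A *v w)) / 2"
    unfolding gg_def using symw
    by (simp add: matrix_vector_mult_diff_distrib inner_diff_left inner_diff_right algebra_simps)
      (simp add: field_simps)
  have "f z \<le> f x - c * (G \<bullet> (A *v gg) - (gg \<bullet> (A *v gg)) / 2)"
    using d 1 4 by (simp add: algebra_simps)
  also have "\<dots> = f x - c / 2 * (G \<bullet> (A *v G) - w \<bullet> (A *v w))" unfolding id by simp
  also have "\<dots> \<le> f x - c / 2 * (lo * (norm G)\<^sup>2 - hi * (norm w)\<^sup>2)"
  proof -
    have "lo * (norm G)\<^sup>2 - hi * (norm w)\<^sup>2 \<le> G \<bullet> (A *v G) - w \<bullet> (A *v w)"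
      using bnd by (meson diff_mono)
    then show ?thesis using cpos by (simp add: mult_left_mono)
  qed
  also have "\<dots> = f x - c * lo / 2 * (norm G)\<^sup>2 + (norm w)\<^sup>2 / (2 * L)"
    using L hi by (simp add: c_def field_simps)
  also have "\<dots> \<le> f x - c * lo / 2 * (2 * \<tau> * (f x - f xs)) + (norm w)\<^sup>2 / (2 * L)"
  proof -
    have "2 * \<tau> * (f x - f xs) \<le> (norm G)\<^sup>2" unfolding G_def by (rule PL[OF gr sc tau])
    moreover have "c * lo / 2 \<ge> 0" using cpos lo by simp
    ultimately have "c * lo / 2 * (2 * \<tau> * (f x - f xs)) \<le> c * lo / 2 * (norm G)\<^sup>2"
      by (rule mult_left_mono)
    then show ?thesis by linarith
  qed
  finally have "f z - f xs \<le> (1 - c * lo * \<tau>) * (f x - f xs) + (norm w)\<^sup>2 / (2 * L)"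
    by (simp add: algebra_simps)
  moreover have "c * lo * \<tau> = \<tau> * lo / (L * hi)" by (simp add: c_def)
  ultimately show ?thesis by (simp add: z_def c_def gg_def G_def mult.commute)
qed


lemma nth_meas[measurable (raw)]:
  fixes g :: "'a \<Rightarrow> 'b::real_normed_vector^'n"
  assumes "g \<in> borel_measurable M"
  shows "(\<lambda>x. g x $ i) \<in> borel_measurable M"
  by (rule borel_measurable_continuous_on[OF linear_continuous_on[OF bounded_linear_vec_nth] assms])

lemma vec_meas:
  fixes g :: "'a \<Rightarrow> real^'n"
  assumes "\<And>i. (\<lambda>x. g x $ i) \<in> borel_measurable M"
  shows "g \<in> borel_measurable M"
  by (subst borel_measurable_euclidean_space) (auto simp: Basis_vec_def inner_axis assms)

lemma mv_meas:
  fixes A :: "'a \<Rightarrow> real^'n^'m" and v :: "'a \<Rightarrow> real^'n"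
  assumes "A \<in> borel_measurable M" "v \<in> borel_measurable M"
  shows "(\<lambda>x. A x *v v x) \<in> borel_measurable M"
proof (rule vec_meas)
  fix i
  have "(\<lambda>x. \<Sum>j\<in>UNIV. A x $ i $ j * v x $ j) \<in> borel_measurable M"
    using assms by measurable
  then show "(\<lambda>x. (A x *v v x) $ i) \<in> borel_measurable M"
    by (simp add: matrix_vector_mult_def)
qed

lemma gen_sigma_subalg:
  fixes X :: "nat \<Rightarrow> 'a \<Rightarrow> 'b::topological_space"
  assumes "\<forall>i\<in>I. X i \<in> borel_measurable M"
  shows "subalgebra M (gen_sigma M X I)"
proof -
  have P: "(\<Union>i\<in>I. {X i -` A \<inter> space M | A. A \<in> sets borel}) \<subseteq> Pow (space M)" by auto
  have "(\<Union>i\<in>I. {X i -` A \<inter> space M | A. A \<in> sets borel}) \<subseteq> sets M"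
    using assms by (auto simp: measurable_def)
  then have "sets (gen_sigma M X I) \<subseteq> sets M"
    unfolding gen_sigma_def using sigma_le_sets[OF P, of M] by simp
  moreover have "space (gen_sigma M X I) = space M"
    unfolding gen_sigma_def using P by simp
  ultimately show ?thesis by (simp add: subalgebra_def)
qed

theorem mainTheorem1:
  fixes M :: "'a measure"
    and \<xi> :: "'a \<Rightarrow> real^'m"
    and F :: "real^'n \<Rightarrow> real^'m \<Rightarrow> real"
    and gradF :: "real^'n \<Rightarrow> real^'m \<Rightarrow> real^'n"
    and f :: "real^'n \<Rightarrow> real"
    and gradf :: "real^'n \<Rightarrow> real^'n"
    and xs x0 :: "real^'n"
    and om :: "nat \<Rightarrow> nat \<Rightarrow> 'a \<Rightarrow> 'a"
    and N :: "nat \<Rightarrow> nat"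
    and H :: "nat \<Rightarrow> 'a \<Rightarrow> real^'n^'n"
    and X :: "nat \<Rightarrow> 'a \<Rightarrow> real^'n"
    and \<tau> L \<nu>1 \<nu>2 lam_lo lam_hi \<gamma> :: real
  assumes prob: "prob_space M"
    and xi_meas: "\<xi> \<in> borel_measurable M"
    and F_int: "\<forall>x. integrable M (\<lambda>\<omega>. F x (\<xi> \<omega>))"
    and f_def: "\<forall>x. f x = (\<integral>\<omega>. F x (\<xi> \<omega>) \<partial>M)"
    and tau_pos: "\<tau> > 0"
    and f_strong: "strongly_convex_on UNIV \<tau> f"
    and xs_min: "\<forall>x. f xs \<le> f x"
    \<comment> \<open>(a)\<close>
    and F_convex: "\<forall>\<omega>\<in>space M. convex_on UNIV (\<lambda>z. F z (\<xi> \<omega>))"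
    and F_grad: "\<forall>\<omega>\<in>space M. \<forall>x. GDERIV (\<lambda>z. F z (\<xi> \<omega>)) x :> gradF x (\<xi> \<omega>)"
    and F_C1: "\<forall>\<omega>\<in>space M. continuous_on UNIV (\<lambda>x. gradF x (\<xi> \<omega>))"
    and f_grad: "\<forall>x. GDERIV f x :> gradf x"
    and f_C1: "continuous_on UNIV gradf"
    and L_pos: "L > 0"
    and f_Lip: "\<forall>x y. norm (gradf x - gradf y) \<le> L * norm (x - y)"
    \<comment> \<open>samples and sample sizes\<close>
    and om_meas: "\<forall>j k. om j k \<in> measurable M M"
    and N_pos: "\<forall>k. N k > 0"
    and N_mono: "mono N"
    and N0: "real (N 0) > 2 * \<nu>1\<^sup>2 * lam_hi / (\<tau>\<^sup>2 * lam_lo)"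
    \<comment> \<open>iteration\<close>
    and gamma: "\<gamma> = 1 / (L * lam_hi)"
    and X0: "\<forall>\<omega>\<in>space M. X 0 \<omega> = x0"
    and X_step: "\<forall>k. \<forall>\<omega>\<in>space M. X (Suc k) \<omega> = X k \<omega> - \<gamma> *\<^sub>R (H k \<omega> *v
          ((1 / real (N k)) *\<^sub>R (\<Sum>j\<in>{1..N k}. gradF (X k \<omega>) (\<xi> (om j k \<omega>)))))"
    \<comment> \<open>(b)\<close>
    and nu_pos: "\<nu>1 > 0" "\<nu>2 > 0"
    and noise_var: "\<forall>k. AE \<omega> in M.
          nn_cond_exp M (gen_sigma M X {..k - 1})
            (\<lambda>\<omega>. ennreal ((norm (gradf (X k \<omega>) - (1 / real (N k)) *\<^sub>R
                 (\<Sum>j\<in>{1..N k}. gradF (X k \<omega>) (\<xi> (om j k \<omega>)))))\<^sup>2)) \<omega>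
          \<le> ennreal ((\<nu>1\<^sup>2 * (norm (X k \<omega>))\<^sup>2 + \<nu>2\<^sup>2) / real (N k))"
    and noise_int: "\<forall>k i. integrable M (\<lambda>\<omega>. (gradf (X k \<omega>) - (1 / real (N k)) *\<^sub>R
                 (\<Sum>j\<in>{1..N k}. gradF (X k \<omega>) (\<xi> (om j k \<omega>)))) $ i)"
    and noise_mean: "\<forall>k i. AE \<omega> in M.
          real_cond_exp M (gen_sigma M X {..k - 1})
            (\<lambda>\<omega>. (gradf (X k \<omega>) - (1 / real (N k)) *\<^sub>R
                 (\<Sum>j\<in>{1..N k}. gradF (X k \<omega>) (\<xi> (om j k \<omega>)))) $ i) \<omega> = 0"
    \<comment> \<open>(c)\<close>
    and lam_pos: "0 < lam_lo" "lam_lo \<le> lam_hi"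
    and H_meas: "\<forall>k. H k \<in> borel_measurable (gen_sigma M X {..k - 1})"
    and H_spd: "\<forall>k. \<forall>\<omega>\<in>space M. transpose (H k \<omega>) = H k \<omega> \<and>
          (\<forall>v. v \<noteq> 0 \<longrightarrow> v \<bullet> (H k \<omega> *v v) > 0)"
    and H_bounds: "\<forall>k. AE \<omega> in M. \<forall>v.
          lam_lo * (norm v)\<^sup>2 \<le> v \<bullet> (H k \<omega> *v v) \<and> v \<bullet> (H k \<omega> *v v) \<le> lam_hi * (norm v)\<^sup>2"
  shows "\<forall>k\<ge>1. (\<integral>\<omega>. f (X (Suc k) \<omega>) - f xs \<partial>M)
           \<le> (1 - \<tau> * lam_lo / (L * lam_hi) + 2 * \<nu>1\<^sup>2 / (L * \<tau> * real (N 0)))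
               * (\<integral>\<omega>. f (X k \<omega>) - f xs \<partial>M)
             + (2 * \<nu>1\<^sup>2 * (norm xs)\<^sup>2 + \<nu>2\<^sup>2) / (2 * L * real (N k))"
proof -
  interpret prob_space M by (rule prob)
  define w where "w k \<omega> = gradf (X k \<omega>) - (1 / real (N k)) *\<^sub>R
                 (\<Sum>j\<in>{1..N k}. gradF (X k \<omega>) (\<xi> (om j k \<omega>)))" for k \<omega>
  define Fk where "Fk k = gen_sigma M X {..k - 1}" for k
  define D where "D k \<omega> = f (X k \<omega>) - f xs" for k \<omega>
  define \<rho> where "\<rho> = 1 - \<tau> * lam_lo / (L * lam_hi)"
  have hi: "lam_hi > 0" using lam_pos by simp
  have w_meas: "w k \<in> borel_measurable M" for k
  proof (rule vec_meas)
    fix i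
    have "integrable M (\<lambda>\<omega>. w k \<omega> $ i)" using noise_int by (simp add: w_def)
    then show "(\<lambda>\<omega>. w k \<omega> $ i) \<in> borel_measurable M" by (rule borel_measurable_integrable)
  qed
  have gradf_meas: "(\<lambda>\<omega>. gradf (Y \<omega>)) \<in> borel_measurable M" if "Y \<in> borel_measurable M" for Y
    by (rule borel_measurable_continuous_on[OF f_C1 that])
  have fc: "continuous_on UNIV f"
    using f_grad by (intro continuous_at_imp_continuous_on) (auto intro: has_derivative_continuous simp: gderiv_def)
  have X_meas_all: "\<forall>i\<le>k. X i \<in> borel_measurable M" for k
  proof (induction k)
    case 0
    have "(\<lambda>_. x0) \<in> borel_measurable M" by simp
    then have "X 0 \<in> borel_measurable M"
      using measurable_cong[of M "X 0" "\<lambda>_. x0"] X0 by simp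
    then show ?case by simp
  next
    case (Suc k)
    have sub: "subalgebra M (Fk k)" unfolding Fk_def
      by (rule gen_sigma_subalg) (use Suc.IH in auto)
    have Hm: "H k \<in> borel_measurable M"
      using measurable_from_subalg[OF sub, of "H k" borel] H_meas by (simp add: Fk_def)
    have Xk: "X k \<in> borel_measurable M" using Suc.IH by simp
    have T: "(\<lambda>\<omega>. X k \<omega> - \<gamma> *\<^sub>R (H k \<omega> *v (gradf (X k \<omega>) - w k \<omega>))) \<in> borel_measurable M"
      using Xk Hm w_meas[of k] gradf_meas[OF Xk]
      by (intro borel_measurable_diff borel_measurable_scaleR mv_meas) auto
    have "X (Suc k) \<omega> = X k \<omega> - \<gamma> *\<^sub>R (H k \<omega> *v (gradf (X k \<omega>) - w k \<omega>))" if "\<omega> \<in> space M" for \<omega>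
      using X_step that by (simp add: w_def)
    then have "X (Suc k) \<in> borel_measurable M"
      using measurable_cong[of M "X (Suc k)"] T by simp
    then show ?case using Suc.IH le_Suc_eq by auto
  qed
  have X_meas: "X k \<in> borel_measurable M" for k using X_meas_all[of k] by simp
  have D_meas: "D k \<in> borel_measurable M" for k
    unfolding D_def using borel_measurable_continuous_on[OF fc X_meas[of k]] by simp
  have D_nn: "0 \<le> D k \<omega>" for k \<omega> using xs_min by (simp add: D_def)
  have gz: "gradf xs = 0" by (rule grad_zero[OF f_grad f_Lip L_pos xs_min])
  have nb: "\<nu>1\<^sup>2 * (norm (X k \<omega>))\<^sup>2 + \<nu>2\<^sup>2 \<le> 4 * \<nu>1\<^sup>2 / \<tau> * D k \<omega> + 2 * \<nu>1\<^sup>2 * (norm xs)\<^sup>2 + \<nu>2\<^sup>2" for k \<omega>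
  proof -
    have q: "\<tau> / 2 * (norm (X k \<omega> - xs))\<^sup>2 \<le> D k \<omega>"
      unfolding D_def by (rule quad_growth[OF f_grad f_strong gz])
    have "norm (X k \<omega>) \<le> norm (X k \<omega> - xs) + norm xs" using norm_triangle_ineq[of "X k \<omega> - xs" xs] by simp
    then have "(norm (X k \<omega>))\<^sup>2 \<le> (norm (X k \<omega> - xs) + norm xs)\<^sup>2" by (simp add: power_mono)
    also have "\<dots> \<le> 2 * (norm (X k \<omega> - xs))\<^sup>2 + 2 * (norm xs)\<^sup>2"
      using sum_squares_bound[of "norm (X k \<omega> - xs)" "norm xs"] by (simp add: power2_eq_square algebra_simps)
    also have "\<dots> \<le> 4 / \<tau> * D k \<omega> + 2 * (norm xs)\<^sup>2"
    proof -
      have "(norm (X k \<omega> - xs))\<^sup>2 \<le> 2 / \<tau> * D k \<omega>" using q tau_pos by (simp add: field_simps)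
      then show ?thesis by simp
    qed
    finally have "(norm (X k \<omega>))\<^sup>2 \<le> 4 / \<tau> * D k \<omega> + 2 * (norm xs)\<^sup>2" .
    then have "\<nu>1\<^sup>2 * (norm (X k \<omega>))\<^sup>2 \<le> \<nu>1\<^sup>2 * (4 / \<tau> * D k \<omega> + 2 * (norm xs)\<^sup>2)"
      by (simp add: mult_left_mono)
    then show ?thesis by (simp add: algebra_simps)
  qed
  have pw: "AE \<omega> in M. D (Suc k) \<omega> \<le> \<rho> * D k \<omega> + (norm (w k \<omega>))\<^sup>2 / (2 * L)" for k
    using H_bounds[rule_format, of k] AE_space
  proof eventually_elim
    case (elim \<omega>)
    have sym: "transpose (H k \<omega>) = H k \<omega>" using H_spd elim(2) by blast
    have eq: "X (Suc k) \<omega> = X k \<omega> - (1 / (L * lam_hi)) *\<^sub>R (H k \<omega> *v (gradf (X k \<omega>) - w k \<omega>))"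
      using X_step elim(2) gamma by (simp add: w_def)
    show ?case
      using step_bound[OF f_grad f_Lip f_strong tau_pos L_pos sym elim(1) lam_pos, of "X k \<omega>" "w k \<omega>" xs]
      unfolding D_def \<rho>_def eq by simp
  qed
  have key: "integrable M (\<lambda>\<omega>. (norm (w k \<omega>))\<^sup>2) \<and>
      (\<integral>\<omega>. (norm (w k \<omega>))\<^sup>2 \<partial>M) \<le> (4 * \<nu>1\<^sup>2 / \<tau> * (\<integral>\<omega>. D k \<omega> \<partial>M) + 2 * \<nu>1\<^sup>2 * (norm xs)\<^sup>2 + \<nu>2\<^sup>2) / real (N k)"
    if intD: "integrable M (D k)" for k
  proof -
    define B where "B \<omega> = (4 * \<nu>1\<^sup>2 / \<tau> * D k \<omega> + 2 * \<nu>1\<^sup>2 * (norm xs)\<^sup>2 + \<nu>2\<^sup>2) / real (N k)" for \<omega>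
    have Np: "real (N k) > 0" using N_pos by simp
    have intB: "integrable M B" unfolding B_def using intD by simp
    have intBv: "(\<integral>\<omega>. B \<omega> \<partial>M) = (4 * \<nu>1\<^sup>2 / \<tau> * (\<integral>\<omega>. D k \<omega> \<partial>M) + 2 * \<nu>1\<^sup>2 * (norm xs)\<^sup>2 + \<nu>2\<^sup>2) / real (N k)"
      unfolding B_def using intD by (simp add: prob_space)
    have Bnn: "0 \<le> B \<omega>" for \<omega> unfolding B_def using D_nn[of k \<omega>] tau_pos Np by simp
    have sub: "subalgebra M (Fk k)" unfolding Fk_def
      by (rule gen_sigma_subalg) (use X_meas in auto)
    have fms: "finite_measure_subalgebra M (Fk k)"
      unfolding finite_measure_subalgebra_def finite_measure_subalgebra_axioms_def
      using sub finite_measure_axioms by simp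
    have sfs: "sigma_finite_subalgebra M (Fk k)"
      by (rule finite_measure_subalgebra_is_sigma_finite[OF fms])
    have wm: "(\<lambda>\<omega>. ennreal ((norm (w k \<omega>))\<^sup>2)) \<in> borel_measurable M" using w_meas[of k] by measurable
    have nv: "AE \<omega> in M. nn_cond_exp M (Fk k) (\<lambda>\<omega>. ennreal ((norm (w k \<omega>))\<^sup>2)) \<omega>
          \<le> ennreal ((\<nu>1\<^sup>2 * (norm (X k \<omega>))\<^sup>2 + \<nu>2\<^sup>2) / real (N k))"
      using noise_var by (simp add: w_def Fk_def)
    have "(\<integral>\<^sup>+\<omega>. ennreal ((norm (w k \<omega>))\<^sup>2) \<partial>M) = (\<integral>\<^sup>+\<omega>. nn_cond_exp M (Fk k) (\<lambda>\<omega>. ennreal ((norm (w k \<omega>))\<^sup>2)) \<omega> \<partial>M)"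
      using sigma_finite_subalgebra.nn_cond_exp_intg[OF sfs, of "\<lambda>_. 1" "\<lambda>\<omega>. ennreal ((norm (w k \<omega>))\<^sup>2)"] wm
      by simp
    also have "\<dots> \<le> (\<integral>\<^sup>+\<omega>. ennreal (B \<omega>) \<partial>M)"
    proof (rule nn_integral_mono_AE)
      show "AE \<omega> in M. nn_cond_exp M (Fk k) (\<lambda>\<omega>. ennreal ((norm (w k \<omega>))\<^sup>2)) \<omega> \<le> ennreal (B \<omega>)"
        using nv
      proof eventually_elim
        case (elim \<omega>)
        have "(\<nu>1\<^sup>2 * (norm (X k \<omega>))\<^sup>2 + \<nu>2\<^sup>2) / real (N k) \<le> B \<omega>"
          unfolding B_def using nb[of k \<omega>] Np by (simp add: divide_right_mono)
        then show ?case using elim by (meson ennreal_leI order_trans)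
      qed
    qed
    also have "\<dots> = ennreal (\<integral>\<omega>. B \<omega> \<partial>M)"
      by (rule nn_integral_eq_integral[OF intB]) (simp add: Bnn)
    finally have le: "(\<integral>\<^sup>+\<omega>. ennreal ((norm (w k \<omega>))\<^sup>2) \<partial>M) \<le> ennreal (\<integral>\<omega>. B \<omega> \<partial>M)" .
    have intw: "integrable M (\<lambda>\<omega>. (norm (w k \<omega>))\<^sup>2)"
    proof (rule integrableI_bounded)
      show "(\<lambda>\<omega>. (norm (w k \<omega>))\<^sup>2) \<in> borel_measurable M" using w_meas[of k] by measurable
      show "(\<integral>\<^sup>+\<omega>. ennreal (norm ((norm (w k \<omega>))\<^sup>2)) \<partial>M) < \<infinity>"
        using le by (simp add: le_less_trans)
    qed
    have "ennreal (\<integral>\<omega>. (norm (w k \<omega>))\<^sup>2 \<partial>M) = (\<integral>\<^sup>+\<omega>. ennreal ((norm (w k \<omega>))\<^sup>2) \<partial>M)"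
      by (rule nn_integral_eq_integral[OF intw, symmetric]) simp
    with le have "ennreal (\<integral>\<omega>. (norm (w k \<omega>))\<^sup>2 \<partial>M) \<le> ennreal (\<integral>\<omega>. B \<omega> \<partial>M)" by simp
    moreover have "0 \<le> (\<integral>\<omega>. B \<omega> \<partial>M)" using Bnn by (simp add: integral_nonneg_AE)
    ultimately have "(\<integral>\<omega>. (norm (w k \<omega>))\<^sup>2 \<partial>M) \<le> (\<integral>\<omega>. B \<omega> \<partial>M)"
      by (simp add: ennreal_le_iff)
    with intw intBv show ?thesis by simp
  qed
  have intD: "integrable M (D k)" for k
  proof (induction k)
    case 0
    have "integrable M (\<lambda>_. f x0 - f xs)" by simp
    then show ?case using Bochner_Integration.integrable_cong[of M M "\<lambda>_. f x0 - f xs" "D 0"] X0 by (simp add: D_def[abs_def])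
  next
    case (Suc k)
    have "integrable M (\<lambda>\<omega>. \<rho> * D k \<omega> + (norm (w k \<omega>))\<^sup>2 / (2 * L))"
      using Suc.IH key[OF Suc.IH] by simp
    then show ?case
    proof (rule Bochner_Integration.integrable_bound)
      show "D (Suc k) \<in> borel_measurable M" by (rule D_meas)
      show "AE \<omega> in M. norm (D (Suc k) \<omega>) \<le> norm (\<rho> * D k \<omega> + (norm (w k \<omega>))\<^sup>2 / (2 * L))"
        using pw[of k]
      proof eventually_elim
        case (elim \<omega>)
        then show ?case using D_nn[of "Suc k" \<omega>] by simp
      qed
    qed
  qed
  show ?thesis
  proof (intro allI impI)
    fix k :: nat assume "k \<ge> 1"
    define I where "I = (\<integral>\<omega>. D k \<omega> \<partial>M)"
    define Wb where "Wb = (\<integral>\<omega>. (norm (w k \<omega>))\<^sup>2 \<partial>M)"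
    have I0: "0 \<le> I" unfolding I_def using D_nn by (simp add: integral_nonneg_AE)
    have Np: "real (N k) > 0" using N_pos by simp
    have N0p: "real (N 0) > 0" using N_pos by simp
    have N0k: "real (N 0) \<le> real (N k)" using N_mono by (simp add: mono_def)
    have kk: "integrable M (\<lambda>\<omega>. (norm (w k \<omega>))\<^sup>2)"
      and Wb: "Wb \<le> (4 * \<nu>1\<^sup>2 / \<tau> * I + 2 * \<nu>1\<^sup>2 * (norm xs)\<^sup>2 + \<nu>2\<^sup>2) / real (N k)"
      using key[OF intD[of k]] by (simp_all add: I_def Wb_def)
    have "(\<integral>\<omega>. D (Suc k) \<omega> \<partial>M) \<le> (\<integral>\<omega>. \<rho> * D k \<omega> + (norm (w k \<omega>))\<^sup>2 / (2 * L) \<partial>M)"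
      by (rule integral_mono_AE) (use intD kk pw in auto)
    also have "\<dots> = \<rho> * I + Wb / (2 * L)"
      using intD[of k] kk by (simp add: I_def Wb_def)
    finally have J: "(\<integral>\<omega>. D (Suc k) \<omega> \<partial>M) \<le> \<rho> * I + Wb / (2 * L)" .
    have "Wb / (2 * L) \<le> (4 * \<nu>1\<^sup>2 / \<tau> * I + 2 * \<nu>1\<^sup>2 * (norm xs)\<^sup>2 + \<nu>2\<^sup>2) / real (N k) / (2 * L)"
      using divide_right_mono[OF Wb, of "2 * L"] L_pos by simp
    also have "\<dots> = 2 * \<nu>1\<^sup>2 / (L * \<tau> * real (N k)) * I + (2 * \<nu>1\<^sup>2 * (norm xs)\<^sup>2 + \<nu>2\<^sup>2) / (2 * L * real (N k))"
      using L_pos tau_pos Np by (simp add: field_simps)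
    also have "\<dots> \<le> 2 * \<nu>1\<^sup>2 / (L * \<tau> * real (N 0)) * I + (2 * \<nu>1\<^sup>2 * (norm xs)\<^sup>2 + \<nu>2\<^sup>2) / (2 * L * real (N k))"
    proof -
      have "2 * \<nu>1\<^sup>2 / (L * \<tau> * real (N k)) \<le> 2 * \<nu>1\<^sup>2 / (L * \<tau> * real (N 0))"
        using L_pos tau_pos N0p N0k by (intro divide_left_mono mult_left_mono mult_pos_pos) auto
      from mult_right_mono[OF this I0] show ?thesis by simp
    qed
    finally have "(\<integral>\<omega>. D (Suc k) \<omega> \<partial>M) \<le> (\<rho> + 2 * \<nu>1\<^sup>2 / (L * \<tau> * real (N 0))) * I
        + (2 * \<nu>1\<^sup>2 * (norm xs)\<^sup>2 + \<nu>2\<^sup>2) / (2 * L * real (N k))"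
      using J by (simp add: algebra_simps)
    then show "(\<integral>\<omega>. f (X (Suc k) \<omega>) - f xs \<partial>M)
           \<le> (1 - \<tau> * lam_lo / (L * lam_hi) + 2 * \<nu>1\<^sup>2 / (L * \<tau> * real (N 0)))
               * (\<integral>\<omega>. f (X k \<omega>) - f xs \<partial>M)
             + (2 * \<nu>1\<^sup>2 * (norm xs)\<^sup>2 + \<nu>2\<^sup>2) / (2 * L * real (N k))"
      by (simp add: D_def I_def \<rho>_def)
  qed
qed

end
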